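(* For every $n\in\mathbb{N}=\{1,2,\dots\}$, the map $a\mapsto\frac{\Psi_{n+1}(a)}{\Psi_n(a)}$ is strictly increasing on $(0,\infty)$.
   Context: $\Psi_n(x)=\frac{\partial^{n+1}}{\partial x^{n+1}}\log\Gamma(x)$ is the polygamma function of order $n$, where $\Gamma$ is the gamma function. *)

theory Defs
  imports "HOL-Analysis.Analysis"
begin

end

theory Submission
  imports Defs
begin

definition SS :: "nat \<Rightarrow> real \<Rightarrow> real" where
  "SS m a = (\<Sum>k. inverse ((a + of_nat k) ^ m))"

lemma SS_sums:
  assumes "a > 0" "m \<ge> 2"
  shows "(\<lambda>k. inverse (a + of_nat k) ^ m) sums SS m a"
proof -
  have "summable (\<lambda>k. inverse ((a + of_nat k) ^ m))"
    using Polygamma_converges'[of a m] assms by simp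
  thus ?thesis unfolding SS_def by (simp add: summable_sums power_inverse)
qed

lemma SS_pos:
  assumes "a > 0" "m \<ge> 2"
  shows "SS m a > 0"
proof -
  have s: "(\<lambda>k. inverse (a + of_nat k) ^ m) sums SS m a" using SS_sums[OF assms] .
  show ?thesis
    using suminf_pos[OF sums_summable[OF s]] sums_unique[OF s] assms by simp
qed

lemma SS_ineq:
  assumes "a > 0" "m \<ge> 2"
  shows "SS (m+1) a ^ 2 \<le> SS m a * SS (m+2) a"
proof -
  define x where "x k = inverse (a + of_nat k)" for k
  define t where "t = SS (m+1) a / SS m a"
  have p: "SS m a > 0" using SS_pos[OF assms] .
  have s0: "(\<lambda>k. x k ^ m) sums SS m a" using SS_sums[OF assms] by (simp add: x_def)
  have s1: "(\<lambda>k. x k ^ (m+1)) sums SS (m+1) a" using SS_sums[of a "m+1"] assms by (simp add: x_def)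
  have s2: "(\<lambda>k. x k ^ (m+2)) sums SS (m+2) a" using SS_sums[of a "m+2"] assms by (simp add: x_def)
  have "(\<lambda>k. x k ^ (m+2) - (2*t) * x k ^ (m+1) + t^2 * x k ^ m) sums
        (SS (m+2) a - (2*t) * SS (m+1) a + t^2 * SS m a)"
    by (intro sums_add sums_diff sums_mult s0 s1 s2)
  moreover have "(\<lambda>k. x k ^ (m+2) - (2*t) * x k ^ (m+1) + t^2 * x k ^ m) =
      (\<lambda>k. x k ^ m * (x k - t)^2)"
    by (rule ext) (simp add: power2_eq_square algebra_simps power_add)
  ultimately have s: "(\<lambda>k. x k ^ m * (x k - t)^2) sums (SS (m+2) a - (2*t) * SS (m+1) a + t^2 * SS m a)"
    by simp
  have "0 \<le> SS (m+2) a - (2*t) * SS (m+1) a + t^2 * SS m a"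
    by (rule sums_le[of "\<lambda>_. 0" _ 0, OF _ sums_zero s]) (use assms in \<open>simp add: x_def\<close>)
  also have "\<dots> = SS (m+2) a - SS (m+1) a ^ 2 / SS m a"
    using p by (simp add: t_def power2_eq_square field_simps)
  finally show ?thesis using p by (simp add: field_simps)
qed

lemma Poly_SS:
  assumes "a > 0" "n \<ge> 1"
  shows "Polygamma n a = (-1)^Suc n * fact n * SS (Suc n) a"
  using assms by (simp add: Polygamma_def SS_def)

theorem lemmaC1:
  fixes n :: nat
  assumes "n \<ge> 1"
  shows "strict_mono_on {0<..} (\<lambda>a::real. Polygamma (Suc n) a / Polygamma n a)"
proof (rule strict_mono_onI)
  fix r s :: real assume r: "r \<in> {0<..}" and s: "s \<in> {0<..}" and rs: "r < s"
  show "Polygamma (Suc n) r / Polygamma n r < Polygamma (Suc n) s / Polygamma n s"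
  proof (rule DERIV_pos_imp_increasing[OF rs])
    fix x assume x: "r \<le> x" "x \<le> s"
    hence x0: "x > 0" using r by simp
    have nz: "x \<notin> \<int>\<^sub>\<le>\<^sub>0" using x0 by (auto elim!: nonpos_Ints_cases)
    have P0: "Polygamma n x \<noteq> 0"
      using Poly_SS[OF x0 assms] SS_pos[OF x0, of "Suc n"] assms by simp
    let ?y = "(Polygamma (Suc (Suc n)) x * Polygamma n x - Polygamma (Suc n) x * Polygamma (Suc n) x)
              / (Polygamma n x * Polygamma n x)"
    have D: "((\<lambda>a. Polygamma (Suc n) a / Polygamma n a) has_real_derivative ?y) (at x)"
      by (intro DERIV_divide has_field_derivative_Polygamma nz P0)
    have "?y > 0"
    proof -
      define A where "A = SS (Suc n) x"
      define B where "B = SS (Suc (Suc n)) x"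
      define C where "C = SS (Suc (Suc (Suc n))) x"
      have A: "A > 0" unfolding A_def using SS_pos[OF x0, of "Suc n"] assms by simp
      have C: "C > 0" unfolding C_def using SS_pos[OF x0, of "Suc (Suc (Suc n))"] by simp
      have ineq: "B^2 \<le> A * C" unfolding A_def B_def C_def
        using SS_ineq[OF x0, of "Suc n"] assms by simp
      have e0: "Polygamma n x = (-1)^Suc n * fact n * A" using Poly_SS[OF x0 assms] A_def by simp
      have e1: "Polygamma (Suc n) x = (-1)^n * (fact n * (Suc n)) * B"
        using Poly_SS[OF x0, of "Suc n"] B_def by (simp add: algebra_simps)
      have e2: "Polygamma (Suc (Suc n)) x = (-1)^Suc n * (fact n * (Suc n) * (Suc (Suc n))) * C"
        using Poly_SS[OF x0, of "Suc (Suc n)"] C_def by (simp add: algebra_simps)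
      have num: "Polygamma (Suc (Suc n)) x * Polygamma n x - Polygamma (Suc n) x * Polygamma (Suc n) x
          = (fact n)^2 * (Suc n) * ((Suc (Suc n)) * A * C - (Suc n) * B^2)"
        unfolding e0 e1 e2
        by (simp add: algebra_simps power2_eq_square flip: power_add)
      have "(Suc n) * B^2 < (Suc (Suc n)) * (A * C)"
      proof -
        have "(Suc n) * B^2 \<le> (Suc n) * (A * C)" using ineq by (intro mult_left_mono) auto
        also have "\<dots> < (Suc (Suc n)) * (A * C)" using A C by (intro mult_strict_right_mono) auto
        finally show ?thesis .
      qed
      hence h: "0 < (Suc (Suc n)) * A * C - (Suc n) * B^2" by (simp add: algebra_simps)
      have "0 < (fact n :: nat)^2 * Suc n" by simp
      hence "0 < real ((fact n)^2 * Suc n)" by (simp only: of_nat_0_less_iff)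
      hence "0 < (fact n)^2 * (Suc n) * ((Suc (Suc n)) * A * C - (Suc n) * B^2)"
        using h by (rule mult_pos_pos)
      thus ?thesis using P0 num by (metis divide_pos_pos not_real_square_gt_zero)
    qed
    thus "\<exists>y. ((\<lambda>a. Polygamma (Suc n) a / Polygamma n a) has_real_derivative y) (at x) \<and> 0 < y"
      using D by blast
  qed
qed

end
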